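(* Let $G$ be a scheduling game belonging to one of the following classes: (i) games on related machines with arbitrary priority lists in which all jobs have the same processing-time function (either all $p(t)=b+at$, or all $p(t)=\max\{\tau,b-at\}$); (ii) games on two related machines with arbitrary priority lists in which all jobs have positive deterioration; (iii) games on identical machines (common speed $s$) with arbitrary priority lists in which either all jobs have positive deterioration or all jobs have negative deterioration with $a_i\le s$; (iv) games on related machines with a global priority list (all machines share the same list) and arbitrary jobs. Then every best-response sequence in $G$ is finite, and thus converges to a pure Nash equilibrium.
   Context: Scheduling game: a finite set $N$ of $n\ge1$ jobs (players) and a set $M$ of machines. Machine $j$ has speed $s_j>0$ and a priority list $\pi_j$, a bijection $N\to\{1,\dots,n\}$; job $u$ has higher priority than $v$ on $j$ iff $\pi_j(u)<\pi_j(v)$. Each job $i$ has a processing-time function $p_i$: with positive deterioration $p_i(t)=b_i+a_it$ ($b_i,a_i\ge0$), with negative deterioration $p_i(t)=\max\{\tau_i,b_i-a_it\}$ ($b_i,a_i\ge0$, $\tau_i>0$). A profile $\sigma\in M^N$ assigns each job to a machine. On machine $j$, the jobs assigned to it, listed in increasing $\pi_j$-order as $i_1,i_2,\dots$, are processed without idle time: $S_{i_1}(\sigma)=0$, $C_{i_k}(\sigma)=S_{i_k}(\sigma)+p_{i_k}(S_{i_k}(\sigma))/s_j$, $S_{i_{k+1}}(\sigma)=C_{i_k}(\sigma)$. The cost of job $i$ is $C_i(\sigma)$. A pure Nash equilibrium (NE) is a profile in which no job can strictly decrease its completion time by unilaterally changing its machine. A best-response sequence is a sequence of profiles in which each profile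 is obtained from the previous one by letting a single job, which can strictly decrease its completion time by deviating, move to a machine that minimizes its completion time given the other jobs' strategies. *)

theory Defs
  imports Complex_Main
begin

text \<open>Jobs are the elements of a finite type 'j (the player set N = UNIV, n = card (UNIV :: 'j set)),
machines are the elements of a finite type 'm (the machine set M = UNIV).\<close>

datatype ptime =
    PosDet real real
  | NegDet real real real

fun ptime_eval :: "ptime \<Rightarrow> real \<Rightarrow> real" where
  "ptime_eval (PosDet b a) t = b + a * t"
| "ptime_eval (NegDet \<tau> b a) t = max \<tau> (b - a * t)"

fun ptime_ok :: "ptime \<Rightarrow> bool" where
  "ptime_ok (PosDet b a) \<longleftrightarrow> b \<ge> 0 \<and> a \<ge> 0"
| "ptime_ok (NegDet \<tau> b a) \<longleftrightarrow> \<tau> > 0 \<and> b \<ge> 0 \<and> a \<ge> 0"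

fun is_pos :: "ptime \<Rightarrow> bool" where
  "is_pos (PosDet b a) = True"
| "is_pos (NegDet \<tau> b a) = False"

fun det_rate :: "ptime \<Rightarrow> real" where
  "det_rate (PosDet b a) = a"
| "det_rate (NegDet \<tau> b a) = a"

definition valid_game ::
  "('m::finite \<Rightarrow> real) \<Rightarrow> ('m \<Rightarrow> 'j::finite \<Rightarrow> nat) \<Rightarrow> ('j \<Rightarrow> ptime) \<Rightarrow> bool" where
  "valid_game s \<pi> p \<longleftrightarrow>
     (\<forall>m. s m > 0) \<and>
     (\<forall>m. bij_betw (\<pi> m) UNIV {1..card (UNIV :: 'j set)}) \<and>
     (\<forall>i. ptime_ok (p i))"

definition prio_list :: "('m \<Rightarrow> 'j::finite \<Rightarrow> nat) \<Rightarrow> 'm \<Rightarrow> 'j list" where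
  "prio_list \<pi> m = map (\<lambda>k. THE i. \<pi> m i = k) [1..<Suc (card (UNIV :: 'j set))]"

fun run :: "real \<Rightarrow> ('j \<Rightarrow> ptime) \<Rightarrow> real \<Rightarrow> 'j list \<Rightarrow> real" where
  "run sp p t [] = t"
| "run sp p t (k # ks) = run sp p (t + ptime_eval (p k) t / sp) ks"

definition compl ::
  "('m \<Rightarrow> real) \<Rightarrow> ('m \<Rightarrow> 'j::finite \<Rightarrow> nat) \<Rightarrow> ('j \<Rightarrow> ptime) \<Rightarrow> ('j \<Rightarrow> 'm) \<Rightarrow> 'j \<Rightarrow> real" where
  "compl s \<pi> p \<sigma> i =
     run (s (\<sigma> i)) p 0
       (filter (\<lambda>k. \<sigma> k = \<sigma> i \<and> \<pi> (\<sigma> i) k \<le> \<pi> (\<sigma> i) i) (prio_list \<pi> (\<sigma> i)))"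

definition is_NE ::
  "('m \<Rightarrow> real) \<Rightarrow> ('m \<Rightarrow> 'j::finite \<Rightarrow> nat) \<Rightarrow> ('j \<Rightarrow> ptime) \<Rightarrow> ('j \<Rightarrow> 'm) \<Rightarrow> bool" where
  "is_NE s \<pi> p \<sigma> \<longleftrightarrow> (\<forall>i m. compl s \<pi> p \<sigma> i \<le> compl s \<pi> p (\<sigma>(i := m)) i)"

definition br_step ::
  "('m \<Rightarrow> real) \<Rightarrow> ('m \<Rightarrow> 'j::finite \<Rightarrow> nat) \<Rightarrow> ('j \<Rightarrow> ptime) \<Rightarrow> ('j \<Rightarrow> 'm) \<Rightarrow> ('j \<Rightarrow> 'm) \<Rightarrow> bool" where
  "br_step s \<pi> p \<sigma> \<sigma>' \<longleftrightarrow>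
     (\<exists>i m. \<sigma>' = \<sigma>(i := m) \<and>
        (\<exists>m'. compl s \<pi> p (\<sigma>(i := m')) i < compl s \<pi> p \<sigma> i) \<and>
        (\<forall>m'. compl s \<pi> p (\<sigma>(i := m)) i \<le> compl s \<pi> p (\<sigma>(i := m')) i))"

definition game_class ::
  "('m::finite \<Rightarrow> real) \<Rightarrow> ('m \<Rightarrow> 'j::finite \<Rightarrow> nat) \<Rightarrow> ('j \<Rightarrow> ptime) \<Rightarrow> bool" where
  "game_class s \<pi> p \<longleftrightarrow>
     (\<forall>i j. p i = p j) \<or>
     (card (UNIV :: 'm set) = 2 \<and> (\<forall>i. is_pos (p i))) \<or>
     ((\<forall>m m'. s m = s m') \<and>
        ((\<forall>i. is_pos (p i)) \<or> (\<forall>i. \<not> is_pos (p i) \<and> (\<forall>m. det_rate (p i) \<le> s m)))) \<or>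
     (\<forall>m m'. \<pi> m = \<pi> m')"

end

theory Submission
  imports Defs "HOL-Library.Multiset"
begin


definition lexlt :: "real \<times> real \<Rightarrow> real \<times> real \<Rightarrow> bool" where
  "lexlt a b \<longleftrightarrow> fst a < fst b \<or> (fst a = fst b \<and> snd a < snd b)"

definition lexrel :: "((real \<times> real) \<times> (real \<times> real)) set" where
  "lexrel = {(a, b). lexlt b a}"

lemma trans_lexrel: "trans lexrel"
  unfolding lexrel_def lexlt_def trans_def by auto

lemma irrefl_lexrel: "irrefl lexrel"
  unfolding lexrel_def lexlt_def irrefl_def by auto

definition Phi :: "('j::finite \<Rightarrow> 'm) \<Rightarrow> ('j \<Rightarrow> real \<times> real) \<Rightarrow> (real \<times> real) multiset" where
  "Phi \<sigma> e = image_mset e (mset_set UNIV)"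

lemma step_mult:
  fixes E :: "('j::finite \<Rightarrow> 'm) \<Rightarrow> 'j \<Rightarrow> real \<times> real"
  assumes i1: "lexlt (E \<sigma>' i) (E \<sigma> i)"
    and i2: "\<forall>j. j \<noteq> i \<longrightarrow> E \<sigma>' j = E \<sigma> j \<or> lexlt (E \<sigma>' i) (E \<sigma> j)"
  shows "(image_mset (E \<sigma>) (mset_set UNIV), image_mset (E \<sigma>') (mset_set UNIV)) \<in> mult lexrel"
proof -
  define U where "U = {j. E \<sigma>' j = E \<sigma> j \<and> j \<noteq> i}"
  have split: "mset_set (UNIV::'j set) = mset_set U + mset_set (- U)"
    using mset_set_Union[of U "- U"] by simp
  have eqI: "image_mset (E \<sigma>') (mset_set U) = image_mset (E \<sigma>) (mset_set U)"
    by (rule image_mset_cong) (simp add: U_def)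
  have iin: "i \<in> - U" by (simp add: U_def)
  have "(image_mset (E \<sigma>) (mset_set U) + image_mset (E \<sigma>) (mset_set (- U)),
         image_mset (E \<sigma>) (mset_set U) + image_mset (E \<sigma>') (mset_set (- U))) \<in> mult lexrel"
  proof (rule one_step_implies_mult)
    show "image_mset (E \<sigma>') (mset_set (- U)) \<noteq> {#}"
      using iin by (auto simp: mset_set_empty_iff)
    show "\<forall>k\<in>#image_mset (E \<sigma>) (mset_set (- U)). \<exists>j\<in>#image_mset (E \<sigma>') (mset_set (- U)). (k, j) \<in> lexrel"
    proof
      fix k assume "k \<in># image_mset (E \<sigma>) (mset_set (- U))"
      then obtain j where j: "j \<in> - U" "k = E \<sigma> j" by auto
      have "lexlt (E \<sigma>' i) (E \<sigma> j)"
        using j i1 i2 by (cases "j = i") (auto simp: U_def)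
      then show "\<exists>j\<in>#image_mset (E \<sigma>') (mset_set (- U)). (k, j) \<in> lexrel"
        using iin j by (auto simp: lexrel_def)
    qed
  qed
  then show ?thesis
    by (simp add: split eqI)
qed

lemma no_inf_chain:
  fixes E :: "('j::finite \<Rightarrow> 'm::finite) \<Rightarrow> 'j \<Rightarrow> real \<times> real"
  assumes ch: "\<forall>k. R (f k) (f (Suc k))"
    and good: "\<And>\<sigma> \<sigma>'. R \<sigma> \<sigma>' \<Longrightarrow> \<exists>i. lexlt (E \<sigma>' i) (E \<sigma> i) \<and> (\<forall>j. j \<noteq> i \<longrightarrow> E \<sigma>' j = E \<sigma> j \<or> lexlt (E \<sigma>' i) (E \<sigma> j))"
  shows False
proof -
  define P where "P k = image_mset (E (f k)) (mset_set UNIV)" for k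
  have st: "(P k, P (Suc k)) \<in> mult lexrel" for k
    using good[OF ch[rule_format, of k]] step_mult unfolding P_def by blast
  have tr: "trans (mult lexrel)" by (rule trans_mult[OF trans_lexrel])
  have lt: "k < l \<Longrightarrow> (P k, P l) \<in> mult lexrel" for k l
  proof (induction l)
    case 0 then show ?case by simp
  next
    case (Suc l)
    show ?case
    proof (cases "k = l")
      case True then show ?thesis using st by simp
    next
      case False
      then have "(P k, P l) \<in> mult lexrel" using Suc by simp
      then show ?thesis using st[of l] tr by (meson transD)
    qed
  qed
  have "\<not> inj f"
  proof
    assume "inj f"
    then have "infinite (range f)" using finite_imageD by blast
    then show False by simp
  qed
  then obtain k l where "f k = f l" "k \<noteq> l" unfolding inj_def by blast
  then obtain k l where kl: "f k = f l" "k < l"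
    by (metis linorder_neqE_nat)
  then have "P k = P l" unfolding P_def by simp
  moreover have "(P k, P l) \<in> mult lexrel" using lt kl by simp
  ultimately show False
    using irrefl_mult[OF trans_lexrel irrefl_lexrel] by (simp add: irrefl_def)
qed



lemma run_append: "run sp p t (xs @ ys) = run sp p (run sp p t xs) ys"
  by (induction xs arbitrary: t) auto

lemma ptime_nonneg: "ptime_ok q \<Longrightarrow> t \<ge> 0 \<Longrightarrow> ptime_eval q t \<ge> 0"
  by (cases q) auto

lemma run_ge:
  assumes "\<forall>k. ptime_ok (p k)" "sp > 0" "t \<ge> 0"
  shows "run sp p t xs \<ge> t"
  using assms(3)
proof (induction xs arbitrary: t)
  case Nil then show ?case by simp
next
  case (Cons a xs)
  have "ptime_eval (p a) t \<ge> 0" using ptime_nonneg assms(1) Cons.prems by blast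
  then have "ptime_eval (p a) t / sp \<ge> 0" using assms(2) by simp
  then have "t + ptime_eval (p a) t / sp \<ge> t" by simp
  moreover have "run sp p (t + ptime_eval (p a) t / sp) xs \<ge> t + ptime_eval (p a) t / sp"
    using Cons.IH Cons.prems \<open>ptime_eval (p a) t / sp \<ge> 0\<close> by simp
  ultimately show ?case by simp
qed

lemma filter_part:
  assumes "sorted_wrt (\<lambda>a b. f a < (f b :: nat)) L"
  shows "filter R L = filter (\<lambda>k. R k \<and> f k < v) L @ filter (\<lambda>k. R k \<and> \<not> f k < v) L"
  using assms
proof (induction L)
  case Nil then show ?case by simp
next
  case (Cons a L)
  then have IH: "filter R L = filter (\<lambda>k. R k \<and> f k < v) L @ filter (\<lambda>k. R k \<and> \<not> f k < v) L"
    and all: "\<forall>b\<in>set L. f a < f b" by auto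
  show ?case
  proof (cases "f a < v")
    case True then show ?thesis using IH by simp
  next
    case False
    then have "\<forall>b\<in>set L. \<not> f b < v" using all by auto
    then have e1: "filter (\<lambda>k. R k \<and> f k < v) L = []" and e2: "filter (\<lambda>k. R k \<and> \<not> f k < v) L = filter R L"
      by (auto simp: filter_empty_conv intro!: filter_cong)
    show ?thesis using False e1 e2 by simp
  qed
qed

lemma filter_eq_single:
  assumes "distinct L" "j \<in> set L"
  shows "filter (\<lambda>k. k = j) L = [j]"
  using assms
proof (induction L)
  case Nil then show ?case by simp
next
  case (Cons a L)
  show ?case
  proof (cases "a = j")
    case True
    then have "j \<notin> set L" using Cons.prems by auto
    then have "filter (\<lambda>k. k = j) L = []" by (auto simp: filter_empty_conv)
    then show ?thesis using True by simp
  next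
    case False then show ?thesis using Cons by auto
  qed
qed

context
  fixes s :: "'m::finite \<Rightarrow> real" and \<pi> :: "'m \<Rightarrow> 'j::finite \<Rightarrow> nat" and p :: "'j \<Rightarrow> ptime"
  assumes vg: "valid_game s \<pi> p"
begin

lemma spos: "s m > 0" using vg unfolding valid_game_def by auto
lemma pok: "\<forall>k. ptime_ok (p k)" using vg unfolding valid_game_def by auto
lemma bij: "bij_betw (\<pi> m) UNIV {1..card (UNIV :: 'j set)}" using vg unfolding valid_game_def by auto

lemma pi_inj: "\<pi> m a = \<pi> m b \<Longrightarrow> a = b"
  using bij[of m] unfolding bij_betw_def inj_on_def by auto

lemma prio_map: "map (\<pi> m) (prio_list \<pi> m) = [1..<Suc (card (UNIV :: 'j set))]"
proof -
  have "\<pi> m (THE i. \<pi> m i = k) = k" if "k \<in> set [1..<Suc (card (UNIV :: 'j set))]" for k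
  proof -
    have "k \<in> {1..card (UNIV :: 'j set)}" using that by auto
    then obtain i where "\<pi> m i = k" using bij[of m] unfolding bij_betw_def by (metis imageE)
    then have "\<exists>!i. \<pi> m i = k" using pi_inj by blast
    then show ?thesis by (rule theI')
  qed
  then show ?thesis unfolding prio_list_def map_map comp_def by (intro map_idI) blast
qed

lemma prio_sorted: "sorted_wrt (\<lambda>a b. \<pi> m a < \<pi> m b) (prio_list \<pi> m)"
proof -
  have "sorted_wrt (<) (map (\<pi> m) (prio_list \<pi> m))" unfolding prio_map by (rule sorted_wrt_upt)
  then show ?thesis by (simp add: sorted_wrt_map)
qed

lemma prio_distinct: "distinct (prio_list \<pi> m)"
proof -
  have "distinct (map (\<pi> m) (prio_list \<pi> m))" unfolding prio_map by (rule distinct_upt)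
  then show ?thesis by (simp add: distinct_map)
qed

lemma prio_set: "j \<in> set (prio_list \<pi> m)"
proof -
  have "\<pi> m j \<in> {1..card (UNIV :: 'j set)}" using bij[of m] unfolding bij_betw_def by auto
  then have "\<pi> m j \<in> set [1..<Suc (card (UNIV :: 'j set))]" by auto
  then have "\<pi> m j \<in> \<pi> m ` set (prio_list \<pi> m)" using prio_map[of m] by (metis list.set_map)
  then show ?thesis using pi_inj by auto
qed

definition sstart :: "('j \<Rightarrow> 'm) \<Rightarrow> 'j \<Rightarrow> real" where
  "sstart \<sigma> j = run (s (\<sigma> j)) p 0
       (filter (\<lambda>k. \<sigma> k = \<sigma> j \<and> \<pi> (\<sigma> j) k < \<pi> (\<sigma> j) j) (prio_list \<pi> (\<sigma> j)))"

lemma sstart_nonneg: "sstart \<sigma> j \<ge> 0"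
  unfolding sstart_def using run_ge[OF pok spos] by simp

lemma compl_eq: "compl s \<pi> p \<sigma> j = sstart \<sigma> j + ptime_eval (p j) (sstart \<sigma> j) / s (\<sigma> j)"
proof -
  let ?m = "\<sigma> j" let ?L = "prio_list \<pi> ?m"
  have "filter (\<lambda>k. \<sigma> k = ?m \<and> \<pi> ?m k \<le> \<pi> ?m j) ?L =
     filter (\<lambda>k. (\<sigma> k = ?m \<and> \<pi> ?m k \<le> \<pi> ?m j) \<and> \<pi> ?m k < \<pi> ?m j) ?L @
     filter (\<lambda>k. (\<sigma> k = ?m \<and> \<pi> ?m k \<le> \<pi> ?m j) \<and> \<not> \<pi> ?m k < \<pi> ?m j) ?L"
    by (rule filter_part[OF prio_sorted])
  also have "filter (\<lambda>k. (\<sigma> k = ?m \<and> \<pi> ?m k \<le> \<pi> ?m j) \<and> \<pi> ?m k < \<pi> ?m j) ?L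
     = filter (\<lambda>k. \<sigma> k = ?m \<and> \<pi> ?m k < \<pi> ?m j) ?L"
    by (rule filter_cong) auto
  also have "filter (\<lambda>k. (\<sigma> k = ?m \<and> \<pi> ?m k \<le> \<pi> ?m j) \<and> \<not> \<pi> ?m k < \<pi> ?m j) ?L
     = filter (\<lambda>k. k = j) ?L"
    by (rule filter_cong) (auto dest: pi_inj)
  also have "\<dots> = [j]" by (rule filter_eq_single[OF prio_distinct prio_set])
  finally show ?thesis unfolding compl_def sstart_def by (simp add: run_append)
qed

lemma compl_ge_start: "compl s \<pi> p \<sigma> j \<ge> sstart \<sigma> j"
proof -
  have "ptime_eval (p j) (sstart \<sigma> j) \<ge> 0" using ptime_nonneg pok sstart_nonneg by blast
  then have "ptime_eval (p j) (sstart \<sigma> j) / s (\<sigma> j) \<ge> 0" using spos[of "\<sigma> j"] by simp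
  then show ?thesis using compl_eq by simp
qed


lemma run_split_ge:
  assumes "t \<ge> 0"
  shows "run (s m) p t (filter R (prio_list \<pi> m)) \<ge> run (s m) p t (filter (\<lambda>k. R k \<and> \<pi> m k < v) (prio_list \<pi> m))"
proof -
  have "filter R (prio_list \<pi> m) = filter (\<lambda>k. R k \<and> \<pi> m k < v) (prio_list \<pi> m) @ filter (\<lambda>k. R k \<and> \<not> \<pi> m k < v) (prio_list \<pi> m)"
    by (rule filter_part[OF prio_sorted])
  moreover have "run (s m) p t (filter (\<lambda>k. R k \<and> \<pi> m k < v) (prio_list \<pi> m)) \<ge> 0"
    using run_ge[OF pok spos assms, of m "filter (\<lambda>k. R k \<and> \<pi> m k < v) (prio_list \<pi> m)"] assms by linarith
  ultimately show ?thesis by (simp add: run_append run_ge[OF pok spos])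
qed

lemma unchanged:
  assumes "j \<noteq> i" "\<sigma>' = \<sigma>(i := m2)" "(\<sigma> j \<noteq> \<sigma> i \<and> \<sigma> j \<noteq> m2) \<or> \<pi> (\<sigma> j) j < \<pi> (\<sigma> j) i"
  shows "sstart \<sigma>' j = sstart \<sigma> j" "compl s \<pi> p \<sigma>' j = compl s \<pi> p \<sigma> j"
proof -
  have sj: "\<sigma>' j = \<sigma> j" using assms by simp
  have "filter (\<lambda>k. \<sigma>' k = \<sigma>' j \<and> \<pi> (\<sigma>' j) k < \<pi> (\<sigma>' j) j) (prio_list \<pi> (\<sigma>' j))
      = filter (\<lambda>k. \<sigma> k = \<sigma> j \<and> \<pi> (\<sigma> j) k < \<pi> (\<sigma> j) j) (prio_list \<pi> (\<sigma> j))"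
    unfolding sj by (rule filter_cong) (use assms in auto)
  then show st: "sstart \<sigma>' j = sstart \<sigma> j" unfolding sstart_def sj by simp
  show "compl s \<pi> p \<sigma>' j = compl s \<pi> p \<sigma> j" by (simp add: compl_eq st sj)
qed

lemma m2_follower:
  assumes "j \<noteq> i" "\<sigma>' = \<sigma>(i := m2)" "\<sigma> i \<noteq> m2" "\<sigma> j = m2" "\<pi> m2 i < \<pi> m2 j"
  shows "sstart \<sigma> j \<ge> sstart \<sigma>' i"
    and "(\<forall>a b. p a = p b) \<Longrightarrow> compl s \<pi> p \<sigma> j \<ge> compl s \<pi> p \<sigma>' i"
proof -
  let ?L = "prio_list \<pi> m2"
  have A: "filter (\<lambda>k. R k \<and> \<pi> m2 k < \<pi> m2 i) ?L = filter (\<lambda>k. \<sigma>' k = m2 \<and> \<pi> m2 k < \<pi> m2 i) ?L"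
    if "\<And>k. \<pi> m2 k < \<pi> m2 i \<Longrightarrow> R k = (\<sigma> k = m2)" for R
    by (rule filter_cong) (use assms that in auto)
  have si: "sstart \<sigma>' i = run (s m2) p 0 (filter (\<lambda>k. \<sigma>' k = m2 \<and> \<pi> m2 k < \<pi> m2 i) ?L)"
    unfolding sstart_def using assms by simp
  have "sstart \<sigma> j = run (s m2) p 0 (filter (\<lambda>k. \<sigma> k = m2 \<and> \<pi> m2 k < \<pi> m2 j) ?L)"
    unfolding sstart_def using assms by simp
  also have "\<dots> \<ge> run (s m2) p 0 (filter (\<lambda>k. (\<sigma> k = m2 \<and> \<pi> m2 k < \<pi> m2 j) \<and> \<pi> m2 k < \<pi> m2 i) ?L)"
    by (rule run_split_ge) simp
  finally show "sstart \<sigma> j \<ge> sstart \<sigma>' i" using A[of "\<lambda>k. \<sigma> k = m2 \<and> \<pi> m2 k < \<pi> m2 j"] si assms(5) by auto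
  assume same: "\<forall>a b. p a = p b"
  let ?R = "\<lambda>k. \<sigma> k = m2 \<and> \<pi> m2 k \<le> \<pi> m2 j"
  have "filter ?R ?L = filter (\<lambda>k. ?R k \<and> \<pi> m2 k < \<pi> m2 i) ?L @ filter (\<lambda>k. ?R k \<and> \<not> \<pi> m2 k < \<pi> m2 i) ?L"
    by (rule filter_part[OF prio_sorted])
  moreover have "filter (\<lambda>k. ?R k \<and> \<pi> m2 k < \<pi> m2 i) ?L = filter (\<lambda>k. \<sigma>' k = m2 \<and> \<pi> m2 k < \<pi> m2 i) ?L"
    by (rule A) (use assms in auto)
  ultimately have cj: "compl s \<pi> p \<sigma> j = run (s m2) p (sstart \<sigma>' i) (filter (\<lambda>k. ?R k \<and> \<not> \<pi> m2 k < \<pi> m2 i) ?L)"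
    unfolding compl_def using assms si by (simp add: run_append)
  have "j \<in> set (filter (\<lambda>k. ?R k \<and> \<not> \<pi> m2 k < \<pi> m2 i) ?L)" using assms prio_set by auto
  then obtain r rs where rr: "filter (\<lambda>k. ?R k \<and> \<not> \<pi> m2 k < \<pi> m2 i) ?L = r # rs"
    by (cases "filter (\<lambda>k. ?R k \<and> \<not> \<pi> m2 k < \<pi> m2 i) ?L") (auto simp: filter_empty_conv)
  have ci: "compl s \<pi> p \<sigma>' i = sstart \<sigma>' i + ptime_eval (p r) (sstart \<sigma>' i) / s m2"
  proof -
    have "p r = p i" using same by blast
    then show ?thesis using compl_eq[of \<sigma>' i] assms by simp
  qed
  have "compl s \<pi> p \<sigma>' i \<ge> 0" using ci compl_ge_start[of \<sigma>' i] sstart_nonneg[of \<sigma>' i] by linarith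
  then show "compl s \<pi> p \<sigma> j \<ge> compl s \<pi> p \<sigma>' i"
    using cj rr ci run_ge[OF pok spos] by simp
qed

lemma m1_follower:
  assumes "\<sigma> j = \<sigma> i" "\<pi> (\<sigma> i) i < \<pi> (\<sigma> i) j"
  shows "sstart \<sigma> j \<ge> compl s \<pi> p \<sigma> i"
proof -
  let ?m = "\<sigma> i"
  let ?L = "prio_list \<pi> ?m"
  have "sstart \<sigma> j = run (s ?m) p 0 (filter (\<lambda>k. \<sigma> k = ?m \<and> \<pi> ?m k < \<pi> ?m j) ?L)"
    unfolding sstart_def using assms by simp
  also have "\<dots> \<ge> run (s ?m) p 0 (filter (\<lambda>k. (\<sigma> k = ?m \<and> \<pi> ?m k < \<pi> ?m j) \<and> \<pi> ?m k < Suc (\<pi> ?m i)) ?L)"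
    by (rule run_split_ge) simp
  also have "filter (\<lambda>k. (\<sigma> k = ?m \<and> \<pi> ?m k < \<pi> ?m j) \<and> \<pi> ?m k < Suc (\<pi> ?m i)) ?L
       = filter (\<lambda>k. \<sigma> k = ?m \<and> \<pi> ?m k \<le> \<pi> ?m i) ?L"
    by (rule filter_cong) (use assms in auto)
  finally show ?thesis unfolding compl_def by simp
qed


lemma br_decomp:
  assumes "br_step s \<pi> p \<sigma> \<sigma>'"
  obtains i m2 where "\<sigma>' = \<sigma>(i := m2)" "\<sigma> i \<noteq> m2" "compl s \<pi> p \<sigma>' i < compl s \<pi> p \<sigma> i"
proof -
  obtain i m2 m' where a: "\<sigma>' = \<sigma>(i := m2)" "compl s \<pi> p (\<sigma>(i := m')) i < compl s \<pi> p \<sigma> i"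
    "\<forall>m'. compl s \<pi> p (\<sigma>(i := m2)) i \<le> compl s \<pi> p (\<sigma>(i := m')) i"
    using assms unfolding br_step_def by blast
  then have lt: "compl s \<pi> p \<sigma>' i < compl s \<pi> p \<sigma> i"
    using order_le_less_trans[OF a(3)[rule_format, of m'] a(2)] by simp
  moreover have "\<sigma> i \<noteq> m2"
  proof
    assume "\<sigma> i = m2"
    then have "\<sigma>' = \<sigma>" using a by auto
    then show False using lt by simp
  qed
  ultimately show ?thesis using that a by blast
qed

lemma follower_cases:
  assumes "j \<noteq> i" "\<not> ((\<sigma> j \<noteq> \<sigma> i \<and> \<sigma> j \<noteq> m2) \<or> \<pi> (\<sigma> j) j < \<pi> (\<sigma> j) i)"
  shows "(\<sigma> j = m2 \<or> \<sigma> j = \<sigma> i) \<and> \<pi> (\<sigma> j) i < \<pi> (\<sigma> j) j"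
proof -
  have "\<pi> (\<sigma> j) i \<noteq> \<pi> (\<sigma> j) j" using assms(1) pi_inj by blast
  then show ?thesis using assms by auto
qed

lemma good_class1:
  assumes same: "\<forall>a b. p a = p b" and br: "br_step s \<pi> p \<sigma> \<sigma>'"
  defines "E \<equiv> \<lambda>\<sigma> j. (compl s \<pi> p \<sigma> j, real (\<pi> (\<sigma> j) j))"
  shows "\<exists>i. lexlt (E \<sigma>' i) (E \<sigma> i) \<and> (\<forall>j. j \<noteq> i \<longrightarrow> E \<sigma>' j = E \<sigma> j \<or> lexlt (E \<sigma>' i) (E \<sigma> j))"
proof -
  obtain i m2 where mv: "\<sigma>' = \<sigma>(i := m2)" "\<sigma> i \<noteq> m2" "compl s \<pi> p \<sigma>' i < compl s \<pi> p \<sigma> i"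
    using br_decomp[OF br] by blast
  have "E \<sigma>' j = E \<sigma> j \<or> lexlt (E \<sigma>' i) (E \<sigma> j)" if ji: "j \<noteq> i" for j
  proof (cases "(\<sigma> j \<noteq> \<sigma> i \<and> \<sigma> j \<noteq> m2) \<or> \<pi> (\<sigma> j) j < \<pi> (\<sigma> j) i")
    case True
    then show ?thesis using unchanged[OF ji mv(1) True] mv(1) ji unfolding E_def by simp
  next
    case False
    note fc = follower_cases[OF ji False]
    show ?thesis
    proof (cases "\<sigma> j = m2")
      case True
      then have "compl s \<pi> p \<sigma> j \<ge> compl s \<pi> p \<sigma>' i" "\<pi> m2 i < \<pi> m2 j"
        using m2_follower(2)[OF ji mv(1) mv(2) True] same fc by auto
      then show ?thesis unfolding E_def lexlt_def using mv True by auto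
    next
      case False
      then have "\<sigma> j = \<sigma> i" using fc by auto
      then have "sstart \<sigma> j \<ge> compl s \<pi> p \<sigma> i" using m1_follower fc by auto
      then have "compl s \<pi> p \<sigma> j > compl s \<pi> p \<sigma>' i" using compl_ge_start[of \<sigma> j] mv(3) by linarith
      then show ?thesis unfolding E_def lexlt_def by auto
    qed
  qed
  moreover have "lexlt (E \<sigma>' i) (E \<sigma> i)" unfolding E_def lexlt_def using mv(3) by auto
  ultimately show ?thesis by blast
qed

lemma g_mono:
  assumes "ptime_ok q" "s0 > 0" "is_pos q \<or> det_rate q \<le> s0" "t1 \<le> t2"
  shows "t1 + ptime_eval q t1 / s0 \<le> t2 + ptime_eval q t2 / s0"
proof (cases q)
  case (PosDet b a)
  then have "a * t1 \<le> a * t2" using assms by (auto intro: mult_left_mono)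
  then have "(b + a * t1) / s0 \<le> (b + a * t2) / s0" using assms(2) by (simp add: divide_right_mono)
  then show ?thesis using PosDet assms(4) by simp
next
  case (NegDet \<tau> b a)
  then have a: "a \<le> s0" "a \<ge> 0" using assms by auto
  have "a * (t2 - t1) \<le> s0 * (t2 - t1)" using a assms(4) by (intro mult_right_mono) auto
  then have "b - a * t1 \<le> s0 * (t2 - t1) + (b - a * t2)" by (simp add: algebra_simps)
  then have "(b - a * t1) / s0 \<le> (s0 * (t2 - t1) + (b - a * t2)) / s0"
    using assms(2) by (simp add: divide_right_mono)
  also have "\<dots> = (t2 - t1) + (b - a * t2) / s0" using assms(2) by (simp add: add_divide_distrib)
  finally have k: "(b - a * t1) / s0 \<le> (t2 - t1) + (b - a * t2) / s0" .
  have "max \<tau> (b - a * t1) / s0 \<le> (t2 - t1) + max \<tau> (b - a * t2) / s0"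
  proof (cases "\<tau> \<ge> b - a * t1")
    case True
    then have "max \<tau> (b - a * t1) / s0 = \<tau> / s0" by simp
    also have "\<dots> \<le> max \<tau> (b - a * t2) / s0" using assms(2) by (simp add: divide_right_mono)
    finally show ?thesis using assms(4) by simp
  next
    case False
    then have "max \<tau> (b - a * t1) / s0 = (b - a * t1) / s0" by simp
    also have "\<dots> \<le> (t2 - t1) + (b - a * t2) / s0" by (rule k)
    also have "\<dots> \<le> (t2 - t1) + max \<tau> (b - a * t2) / s0" using assms(2) by (simp add: divide_right_mono)
    finally show ?thesis .
  qed
  then show ?thesis using NegDet by simp
qed

lemma good_class3:
  assumes sp: "\<forall>m m'. s m = s m'" and dr: "\<forall>i m. is_pos (p i) \<or> det_rate (p i) \<le> s m"
    and br: "br_step s \<pi> p \<sigma> \<sigma>'"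
  defines "E \<equiv> \<lambda>\<sigma> j. (sstart \<sigma> j, real (\<pi> (\<sigma> j) j))"
  shows "\<exists>i. lexlt (E \<sigma>' i) (E \<sigma> i) \<and> (\<forall>j. j \<noteq> i \<longrightarrow> E \<sigma>' j = E \<sigma> j \<or> lexlt (E \<sigma>' i) (E \<sigma> j))"
proof -
  obtain i m2 where mv: "\<sigma>' = \<sigma>(i := m2)" "\<sigma> i \<noteq> m2" "compl s \<pi> p \<sigma>' i < compl s \<pi> p \<sigma> i"
    using br_decomp[OF br] by blast
  have "E \<sigma>' j = E \<sigma> j \<or> lexlt (E \<sigma>' i) (E \<sigma> j)" if ji: "j \<noteq> i" for j
  proof (cases "(\<sigma> j \<noteq> \<sigma> i \<and> \<sigma> j \<noteq> m2) \<or> \<pi> (\<sigma> j) j < \<pi> (\<sigma> j) i")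
    case True
    then show ?thesis using unchanged[OF ji mv(1) True] mv(1) ji unfolding E_def by simp
  next
    case False
    note fc = follower_cases[OF ji False]
    show ?thesis
    proof (cases "\<sigma> j = m2")
      case True
      then have "sstart \<sigma> j \<ge> sstart \<sigma>' i" "\<pi> m2 i < \<pi> m2 j"
        using m2_follower(1)[OF ji mv(1) mv(2) True] fc by auto
      then show ?thesis unfolding E_def lexlt_def using mv True by auto
    next
      case False
      then have "\<sigma> j = \<sigma> i" using fc by auto
      then have "sstart \<sigma> j \<ge> compl s \<pi> p \<sigma> i" using m1_follower fc by auto
      then have "sstart \<sigma> j > sstart \<sigma>' i" using compl_ge_start[of \<sigma>' i] mv(3) by linarith
      then show ?thesis unfolding E_def lexlt_def by auto
    qed
  qed
  moreover have "sstart \<sigma>' i < sstart \<sigma> i"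
  proof (rule ccontr)
    assume "\<not> sstart \<sigma>' i < sstart \<sigma> i"
    then have le: "sstart \<sigma> i \<le> sstart \<sigma>' i" by simp
    have ss: "s (\<sigma>' i) = s (\<sigma> i)" using sp by blast
    have "compl s \<pi> p \<sigma> i \<le> compl s \<pi> p \<sigma>' i"
      unfolding compl_eq ss
      using g_mono[OF pok[rule_format, of i] spos[of "\<sigma> i"] dr[rule_format, of i "\<sigma> i"] le] .
    then show False using mv(3) by simp
  qed
  then have "lexlt (E \<sigma>' i) (E \<sigma> i)" unfolding E_def lexlt_def by auto
  ultimately show ?thesis by blast
qed

lemma good_class4:
  assumes gl: "\<forall>m m'. \<pi> m = \<pi> m'" and br: "br_step s \<pi> p \<sigma> \<sigma>'"
  defines "E \<equiv> \<lambda>\<sigma> j. (real (\<pi> (\<sigma> j) j), compl s \<pi> p \<sigma> j)"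
  shows "\<exists>i. lexlt (E \<sigma>' i) (E \<sigma> i) \<and> (\<forall>j. j \<noteq> i \<longrightarrow> E \<sigma>' j = E \<sigma> j \<or> lexlt (E \<sigma>' i) (E \<sigma> j))"
proof -
  obtain i m2 where mv: "\<sigma>' = \<sigma>(i := m2)" "\<sigma> i \<noteq> m2" "compl s \<pi> p \<sigma>' i < compl s \<pi> p \<sigma> i"
    using br_decomp[OF br] by blast
  have pe: "\<pi> m k = \<pi> m' k" for m m' k using gl by metis
  have "E \<sigma>' j = E \<sigma> j \<or> lexlt (E \<sigma>' i) (E \<sigma> j)" if ji: "j \<noteq> i" for j
  proof (cases "\<pi> (\<sigma> j) j < \<pi> (\<sigma> j) i")
    case True
    then show ?thesis using unchanged[OF ji mv(1)] mv(1) ji unfolding E_def by simp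
  next
    case False
    have "\<pi> (\<sigma> j) i \<noteq> \<pi> (\<sigma> j) j" using ji pi_inj by blast
    then have "\<pi> (\<sigma> j) i < \<pi> (\<sigma> j) j" using False by simp
    then have "\<pi> (\<sigma>' i) i < \<pi> (\<sigma> j) j" using pe by metis
    then show ?thesis unfolding E_def lexlt_def by auto
  qed
  moreover have "lexlt (E \<sigma>' i) (E \<sigma> i)" unfolding E_def lexlt_def using mv pe by auto
  ultimately show ?thesis by blast
qed

lemma not_NE_step:
  assumes "\<not> is_NE s \<pi> p \<sigma>"
  shows "\<exists>\<sigma>'. br_step s \<pi> p \<sigma> \<sigma>'"
proof -
  obtain i m where im: "compl s \<pi> p (\<sigma>(i := m)) i < compl s \<pi> p \<sigma> i"
    using assms unfolding is_NE_def by (auto simp: not_le)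
  define f where "f m' = compl s \<pi> p (\<sigma>(i := m')) i" for m'
  have "Min (range f) \<in> range f" by (rule Min_in) auto
  then obtain m0 where m0: "f m0 = Min (range f)" by (metis imageE)
  have "\<forall>m'. f m0 \<le> f m'" unfolding m0 by simp
  then have "br_step s \<pi> p \<sigma> (\<sigma>(i := m0))"
    unfolding br_step_def f_def using im by blast
  then show ?thesis by blast
qed


lemma run_mono_t:
  assumes pos: "\<forall>k. is_pos (p k)" and "t \<le> t'" "sp > 0"
  shows "run sp p t xs \<le> run sp p t' xs"
  using assms(2)
proof (induction xs arbitrary: t t')
  case Nil then show ?case by simp
next
  case (Cons a xs)
  have "t + ptime_eval (p a) t / sp \<le> t' + ptime_eval (p a) t' / sp"
    using g_mono[OF pok[rule_format, of a] assms(3) _ Cons.prems] pos by blast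
  then show ?case using Cons.IH by simp
qed

lemma run_filter_mono:
  assumes pos: "\<forall>k. is_pos (p k)" and PQ: "\<forall>k. P k \<longrightarrow> Q k" and "t \<ge> 0" "sp > 0"
  shows "run sp p t (filter P xs) \<le> run sp p t (filter Q xs)"
  using assms(3)
proof (induction xs arbitrary: t)
  case Nil then show ?case by simp
next
  case (Cons a xs)
  have nn: "ptime_eval (p a) t / sp \<ge> 0" using ptime_nonneg pok Cons.prems assms(4) by simp
  show ?case
  proof (cases "P a")
    case True
    then have "Q a" using PQ by blast
    then show ?thesis using True Cons.IH[of "t + ptime_eval (p a) t / sp"] Cons.prems nn by simp
  next
    case False
    show ?thesis
    proof (cases "Q a")
      case True
      have "run sp p t (filter P xs) \<le> run sp p t (filter Q xs)" using Cons.IH Cons.prems by blast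
      also have "\<dots> \<le> run sp p (t + ptime_eval (p a) t / sp) (filter Q xs)"
        by (rule run_mono_t[OF pos _ assms(4)]) (use nn in simp)
      finally show ?thesis using True False by simp
    next
      case False
      then show ?thesis using \<open>\<not> P a\<close> Cons.IH Cons.prems by simp
    qed
  qed
qed

lemma compl_filter_mono:
  assumes pos: "\<forall>k. is_pos (p k)" and "\<tau>' j = \<tau> j" and "\<forall>k. \<tau> k = \<tau> j \<longrightarrow> \<tau>' k = \<tau> j"
  shows "compl s \<pi> p \<tau> j \<le> compl s \<pi> p \<tau>' j"
  unfolding compl_def using assms(2)
  by (simp, intro run_filter_mono[OF pos _ _ spos]) (use assms(3) in auto)

definition Inv2 :: "'m \<Rightarrow> 'm \<Rightarrow> 'j \<Rightarrow> ('j \<Rightarrow> 'm) \<Rightarrow> bool" where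
  "Inv2 mL mF ks \<sigma> \<longleftrightarrow> \<sigma> ks = mL \<and> compl s \<pi> p \<sigma> ks \<le> compl s \<pi> p (\<sigma>(ks := mF)) ks"

lemma inv2_pres:
  assumes pos: "\<forall>k. is_pos (p k)" and two: "\<forall>m. m = mL \<or> m = mF" and ne: "mL \<noteq> mF"
    and slow: "s mL \<le> s mF"
    and inv: "Inv2 mL mF ks \<sigma>"
    and mv: "\<sigma>' = \<sigma>(h := m2)" "\<sigma> h \<noteq> m2" "compl s \<pi> p \<sigma>' h < compl s \<pi> p \<sigma> h"
    and hk: "h \<noteq> ks" "\<pi> mL ks < \<pi> mL h"
  shows "Inv2 mL mF ks \<sigma>'"
proof -
  have sk: "\<sigma> ks = mL" and beta: "compl s \<pi> p \<sigma> ks \<le> compl s \<pi> p (\<sigma>(ks := mF)) ks"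
    using inv unfolding Inv2_def by auto
  have sk': "\<sigma>' ks = mL" using sk mv hk by simp
  have ceq: "compl s \<pi> p \<sigma>' ks = compl s \<pi> p \<sigma> ks"
    using unchanged(2)[OF hk(1)[symmetric] mv(1)] sk hk by simp
  define \<tau> where "\<tau> = \<sigma>(ks := mF)"
  have tt: "\<sigma>'(ks := mF) = \<tau>(h := m2)" unfolding \<tau>_def mv(1) using hk by (auto simp: fun_upd_twist)
  have "compl s \<pi> p \<sigma>' ks \<le> compl s \<pi> p (\<tau>(h := m2)) ks"
  proof (cases "m2 = mF")
    case True
    have "compl s \<pi> p \<tau> ks \<le> compl s \<pi> p (\<tau>(h := m2)) ks"
      by (rule compl_filter_mono[OF pos]) (use True hk in \<open>auto simp: \<tau>_def\<close>)
    then show ?thesis using ceq beta unfolding \<tau>_def by simp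
  next
    case False
    then have m2L: "m2 = mL" using two by blast
    then have shF: "\<sigma> h = mF" using mv(2) two by blast
    have pne: "\<pi> mF ks \<noteq> \<pi> mF h" using hk(1) pi_inj by metis
    show ?thesis
    proof (cases "\<pi> mF ks < \<pi> mF h")
      case True
      have "compl s \<pi> p (\<tau>(h := m2)) ks = compl s \<pi> p \<tau> ks"
        by (rule unchanged(2)[OF hk(1)[symmetric], of "\<tau>(h := m2)" \<tau> m2]) (use True in \<open>auto simp: \<tau>_def\<close>)
      then show ?thesis using ceq beta unfolding \<tau>_def by simp
    next
      case False
      then have hF: "\<pi> mF h < \<pi> mF ks" using pne by simp
      show ?thesis
      proof (rule ccontr)
        assume "\<not> ?thesis"
        then have lt: "compl s \<pi> p (\<tau>(h := m2)) ks < compl s \<pi> p \<sigma>' ks" by simp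
        define u where "u = sstart \<tau> h"
        have th: "\<tau> h = mF" using shF hk unfolding \<tau>_def by simp
        have "sstart (\<tau>(h := m2)) ks = run (s mF) p 0 (filter (\<lambda>k. (\<tau>(h := m2)) k = mF \<and> \<pi> mF k < \<pi> mF ks) (prio_list \<pi> mF))"
          unfolding sstart_def \<tau>_def using hk by simp
        also have "\<dots> \<ge> run (s mF) p 0 (filter (\<lambda>k. (\<tau>(h := m2)) k = mF \<and> \<pi> mF k < \<pi> mF h) (prio_list \<pi> mF))"
          by (rule run_filter_mono[OF pos _ _ spos]) (use hF in auto)
        also have "filter (\<lambda>k. (\<tau>(h := m2)) k = mF \<and> \<pi> mF k < \<pi> mF h) (prio_list \<pi> mF)
            = filter (\<lambda>k. \<tau> k = mF \<and> \<pi> mF k < \<pi> mF h) (prio_list \<pi> mF)"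
          by (rule filter_cong) auto
        also have "run (s mF) p 0 \<dots> = u" unfolding u_def sstart_def using th by simp
        finally have u1: "u \<le> sstart (\<tau>(h := m2)) ks" .
        have u2: "u < compl s \<pi> p \<sigma> ks"
          using u1 compl_ge_start[of "\<tau>(h := m2)" ks] lt ceq by linarith
        have "compl s \<pi> p \<tau> h = compl s \<pi> p \<sigma> h"
          by (rule unchanged(2)[OF hk(1), of \<tau> \<sigma> mF]) (use shF hF in \<open>auto simp: \<tau>_def\<close>)
        then have oldc: "compl s \<pi> p \<sigma> h = u + ptime_eval (p h) u / s mF"
          using compl_eq[of \<tau> h] th u_def by simp
        have S': "sstart \<sigma>' h \<ge> compl s \<pi> p \<sigma>' ks"
          using m1_follower[of \<sigma>' h ks] sk' mv(1) m2L hk by simp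
        have newc: "compl s \<pi> p \<sigma>' h = sstart \<sigma>' h + ptime_eval (p h) (sstart \<sigma>' h) / s mL"
          using compl_eq[of \<sigma>' h] mv(1) m2L by simp
        define b where "b = compl s \<pi> p \<sigma> ks"
        have b0: "b \<ge> 0" unfolding b_def using compl_ge_start sstart_nonneg order_trans by blast
        have "sstart \<sigma>' h + ptime_eval (p h) (sstart \<sigma>' h) / s mL \<ge> b + ptime_eval (p h) b / s mL"
          using g_mono[OF pok[rule_format, of h] spos[of mL] _, of b "sstart \<sigma>' h"] pos S' ceq b_def by auto
        moreover have "ptime_eval (p h) b / s mL \<ge> ptime_eval (p h) b / s mF"
          using ptime_nonneg[OF pok[rule_format, of h] b0] spos[of mL] slow
          by (simp add: frac_le)
        moreover have "b + ptime_eval (p h) b / s mF \<ge> u + ptime_eval (p h) u / s mF"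
          using g_mono[OF pok[rule_format, of h] spos[of mF] _, of u b] pos u2 b_def by auto
        ultimately have "compl s \<pi> p \<sigma>' h \<ge> compl s \<pi> p \<sigma> h" using newc oldc by linarith
        then show False using mv(3) by simp
      qed
    qed
  qed
  then show ?thesis unfolding Inv2_def using sk' tt by simp
qed

lemma inv2_nomove:
  assumes two: "\<forall>m. m = mL \<or> m = mF" and inv: "Inv2 mL mF ks \<sigma>" and br: "br_step s \<pi> p \<sigma> \<sigma>'"
  shows "\<sigma>' ks = \<sigma> ks"
proof -
  obtain i m2 where mv: "\<sigma>' = \<sigma>(i := m2)" "\<sigma> i \<noteq> m2" "compl s \<pi> p \<sigma>' i < compl s \<pi> p \<sigma> i"
    using br_decomp[OF br] by blast
  show ?thesis
  proof (cases "i = ks")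
    case True
    then have "m2 = mF" using mv(2) inv two unfolding Inv2_def by metis
    then show ?thesis using mv inv True unfolding Inv2_def by simp
  next
    case False then show ?thesis using mv by simp
  qed
qed

lemma inv2_start:
  assumes two: "\<forall>m. m = mL \<or> m = mF" and br: "br_step s \<pi> p \<sigma> \<sigma>'"
    and ch: "\<sigma>' ks \<noteq> \<sigma> ks" "\<sigma>' ks = mL"
  shows "Inv2 mL mF ks \<sigma>'"
proof -
  obtain i m2 where mv: "\<sigma>' = \<sigma>(i := m2)" "\<sigma> i \<noteq> m2" "compl s \<pi> p \<sigma>' i < compl s \<pi> p \<sigma> i"
    using br_decomp[OF br] by blast
  have ik: "i = ks" using ch mv by (cases "i = ks") auto
  then have "\<sigma> ks = mF" using ch two by metis
  then have "\<sigma>'(ks := mF) = \<sigma>" using mv ik by auto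
  then show ?thesis unfolding Inv2_def using mv ik ch by simp
qed


lemma mover_in_D:
  assumes br: "br_step s \<pi> p \<sigma> \<sigma>'" and mv: "\<forall>j. j \<notin> D \<longrightarrow> \<sigma>' j = \<sigma> j"
  obtains i m2 where "\<sigma>' = \<sigma>(i := m2)" "\<sigma> i \<noteq> m2" "compl s \<pi> p \<sigma>' i < compl s \<pi> p \<sigma> i" "i \<in> D"
proof -
  obtain i m2 where a: "\<sigma>' = \<sigma>(i := m2)" "\<sigma> i \<noteq> m2" "compl s \<pi> p \<sigma>' i < compl s \<pi> p \<sigma> i"
    using br_decomp[OF br] by blast
  have "i \<in> D" using a mv by (metis fun_upd_same)
  then show ?thesis using a that by blast
qed

lemma eventually_still:
  assumes pos: "\<forall>k. is_pos (p k)" and two: "\<forall>m. m = mL \<or> m = mF" and ne: "mL \<noteq> mF"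
    and slow: "s mL \<le> s mF"
    and ch: "\<forall>n. br_step s \<pi> p (f n) (f (Suc n))" and mv: "\<forall>n j. j \<notin> D \<longrightarrow> f (Suc n) j = f n j"
    and top: "\<forall>h\<in>D. h \<noteq> ks \<longrightarrow> \<pi> mL ks < \<pi> mL h"
  shows "\<exists>N. \<forall>n\<ge>N. f (Suc n) ks = f n ks"
proof (cases "\<exists>t. f (Suc t) ks \<noteq> f t ks \<and> f (Suc t) ks = mL")
  case True
  then obtain t where t: "f (Suc t) ks \<noteq> f t ks" "f (Suc t) ks = mL" by blast
  have I0: "Inv2 mL mF ks (f (Suc t))" using inv2_start[OF two ch[rule_format, of t] t] .
  have I: "Inv2 mL mF ks (f n)" if "n \<ge> Suc t" for n
    using that
  proof (induction n rule: dec_induct)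
    case base then show ?case by (rule I0)
  next
    case (step n)
    obtain i m2 where a: "f (Suc n) = (f n)(i := m2)" "f n i \<noteq> m2"
        "compl s \<pi> p (f (Suc n)) i < compl s \<pi> p (f n) i" "i \<in> D"
      using mover_in_D[OF ch[rule_format, of n]] mv by blast
    have "f (Suc n) ks = f n ks" by (rule inv2_nomove[OF two step.IH ch[rule_format, of n]])
    then have "i \<noteq> ks" using a by (metis fun_upd_same)
    then show ?case using inv2_pres[OF pos two ne slow step.IH a(1-3)] top a(4) by blast
  qed
  show ?thesis
    using I inv2_nomove[OF two _ ch[rule_format]] by blast
next
  case False
  show ?thesis
  proof (cases "\<exists>t. f (Suc t) ks \<noteq> f t ks")
    case True
    then obtain t where t: "f (Suc t) ks \<noteq> f t ks" by blast
    have F: "f n ks = mF" if "n \<ge> Suc t" for n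
      using that
    proof (induction n rule: dec_induct)
      case base then show ?case using False t two by metis
    next
      case (step n) then show ?case using False two by metis
    qed
    have "\<forall>n\<ge>Suc t. f (Suc n) ks = f n ks" using F by simp
    then show ?thesis by blast
  next
    case False2: False
    then show ?thesis by blast
  qed
qed

lemma class2_ind:
  assumes pos: "\<forall>k. is_pos (p k)" and two: "\<forall>m. m = mL \<or> m = mF" and ne: "mL \<noteq> mF"
    and slow: "s mL \<le> s mF"
  shows "card D = c \<Longrightarrow> \<forall>n. br_step s \<pi> p (f n) (f (Suc n)) \<Longrightarrow> \<forall>n j. j \<notin> D \<longrightarrow> f (Suc n) j = f n j \<Longrightarrow> False"
proof (induction c arbitrary: D f rule: less_induct)
  case (less c D f)
  note ch = less.prems(2) and mv = less.prems(3)
  show False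
  proof (cases "D = {}")
    case True
    obtain i m2 where a: "f (Suc 0) = (f 0)(i := m2)" "f 0 i \<noteq> m2"
      using br_decomp[OF ch[rule_format, of 0]] by metis
    have "f (Suc 0) i = f 0 i" using mv True by simp
    then show False using a by simp
  next
    case False
    have fin: "finite D" by simp
    have "Min (\<pi> mL ` D) \<in> \<pi> mL ` D" using False fin by (intro Min_in) auto
    then obtain ks where ks: "ks \<in> D" "\<pi> mL ks = Min (\<pi> mL ` D)" by (metis imageE)
    have top: "\<forall>h\<in>D. h \<noteq> ks \<longrightarrow> \<pi> mL ks < \<pi> mL h"
    proof (intro ballI impI)
      fix h assume h: "h \<in> D" "h \<noteq> ks"
      have "\<pi> mL ks \<le> \<pi> mL h" unfolding ks(2) using h(1) fin by (intro Min_le) auto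
      moreover have "\<pi> mL ks \<noteq> \<pi> mL h" using h(2) pi_inj by metis
      ultimately show "\<pi> mL ks < \<pi> mL h" by simp
    qed
    obtain N where N: "\<forall>n\<ge>N. f (Suc n) ks = f n ks"
      using eventually_still[OF pos two ne slow ch mv top] by blast
    define g where "g n = f (N + n)" for n
    have "card D > 0" using ks(1) fin card_gt_0_iff by blast
    then have cl: "card (D - {ks}) < c" using less.prems(1) ks(1) fin by simp
    have g1: "\<forall>n. br_step s \<pi> p (g n) (g (Suc n))"
    proof
      fix n show "br_step s \<pi> p (g n) (g (Suc n))" unfolding g_def using ch[rule_format, of "N + n"] by simp
    qed
    have g2: "\<forall>n j. j \<notin> D - {ks} \<longrightarrow> g (Suc n) j = g n j"
    proof (intro allI impI)
      fix n j assume j: "j \<notin> D - {ks}"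
      show "g (Suc n) j = g n j"
      proof (cases "j = ks")
        case True
        have "N + n \<ge> N" by simp
        then have "f (Suc (N + n)) ks = f (N + n) ks" using N by blast
        then show ?thesis unfolding g_def using True by simp
      next
        case False
        then have "j \<notin> D" using j by simp
        then have "f (Suc (N + n)) j = f (N + n) j" using mv by blast
        then show ?thesis unfolding g_def by simp
      qed
    qed
    show False by (rule less.IH[OF cl refl g1 g2])
  qed
qed

lemma class2_no_chain_ctx:
  assumes two: "card (UNIV :: 'm set) = 2" and pos: "\<forall>i. is_pos (p i)"
    and ch: "\<forall>k. br_step s \<pi> p (f k) (f (Suc k))"
  shows False
proof -
  have "Min (range s) \<in> range s" by (intro Min_in) auto
  then obtain mL where mL: "s mL = Min (range s)" by (metis imageE)
  have "\<exists>x y. (UNIV :: 'm set) = {x, y} \<and> x \<noteq> y" using card_2_iff[THEN iffD1, OF two] .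
  then obtain x y :: 'm where xy: "UNIV = {x, y}" "x \<noteq> y" by blast
  define mF where "mF = (if mL = x then y else x)"
  have tw: "\<forall>m. m = mL \<or> m = mF"
  proof
    fix m :: 'm
    have "m \<in> (UNIV :: 'm set)" "mL \<in> (UNIV :: 'm set)" by simp_all
    then have "m \<in> {x, y}" "mL \<in> {x, y}" by (simp_all only: xy(1))
    then show "m = mL \<or> m = mF" unfolding mF_def by auto
  qed
  have ne: "mL \<noteq> mF" using xy(2) unfolding mF_def by auto
  have sl: "s mL \<le> s mF" unfolding mL by simp
  have r: "card (UNIV :: 'j set) = card (UNIV :: 'j set)" by (rule refl)
  have m: "\<forall>n j. j \<notin> (UNIV :: 'j set) \<longrightarrow> f (Suc n) j = f n j" by blast
  show False
    by (rule class2_ind[OF pos tw ne sl r ch m])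
qed

end

lemma class2_no_chain:
  fixes s :: "'m::finite \<Rightarrow> real" and \<pi> :: "'m \<Rightarrow> 'j::finite \<Rightarrow> nat" and p :: "'j \<Rightarrow> ptime"
  assumes vg: "valid_game s \<pi> p" and two: "card (UNIV :: 'm set) = 2" and pos: "\<forall>i. is_pos (p i)"
    and ch: "\<forall>k. br_step s \<pi> p (f k) (f (Suc k))"
  shows False
  by (rule class2_no_chain_ctx[OF vg two pos ch])

theorem theorem5:
  fixes s :: "'m::finite \<Rightarrow> real" and \<pi> :: "'m \<Rightarrow> 'j::finite \<Rightarrow> nat" and p :: "'j \<Rightarrow> ptime"
  assumes "valid_game s \<pi> p"
    and "game_class s \<pi> p"
  shows "\<not> (\<exists>f :: nat \<Rightarrow> ('j \<Rightarrow> 'm). \<forall>k. br_step s \<pi> p (f k) (f (Suc k)))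
         \<and> (\<forall>\<sigma>. (\<nexists>\<sigma>'. br_step s \<pi> p \<sigma> \<sigma>') \<longrightarrow> is_NE s \<pi> p \<sigma>)"
proof
  note vg = assms(1)
  show "\<forall>\<sigma>. (\<nexists>\<sigma>'. br_step s \<pi> p \<sigma> \<sigma>') \<longrightarrow> is_NE s \<pi> p \<sigma>"
    using not_NE_step[OF vg] by blast
  show "\<not> (\<exists>f :: nat \<Rightarrow> ('j \<Rightarrow> 'm). \<forall>k. br_step s \<pi> p (f k) (f (Suc k)))"
  proof
    assume "\<exists>f :: nat \<Rightarrow> ('j \<Rightarrow> 'm). \<forall>k. br_step s \<pi> p (f k) (f (Suc k))"
    then obtain f :: "nat \<Rightarrow> ('j \<Rightarrow> 'm)" where ch: "\<forall>k. br_step s \<pi> p (f k) (f (Suc k))" by blast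
    consider (c1) "\<forall>i j. p i = p j"
      | (c2) "card (UNIV :: 'm set) = 2 \<and> (\<forall>i. is_pos (p i))"
      | (c3) "(\<forall>m m'. s m = s m') \<and> ((\<forall>i. is_pos (p i)) \<or> (\<forall>i. \<not> is_pos (p i) \<and> (\<forall>m. det_rate (p i) \<le> s m)))"
      | (c4) "\<forall>m m'. \<pi> m = \<pi> m'"
      using assms(2) unfolding game_class_def by blast
    then show False
    proof cases
      case c1
      show False
        by (rule no_inf_chain[where R = "br_step s \<pi> p" and f = f and
              E = "\<lambda>\<sigma> j. (compl s \<pi> p \<sigma> j, real (\<pi> (\<sigma> j) j))", OF ch])
           (rule good_class1[OF vg c1])
    next
      case c2
      then show False using class2_no_chain[OF vg _ _ ch] by blast
    next
      case c3
      then have sp: "\<forall>m m'. s m = s m'" and dr: "\<forall>i m. is_pos (p i) \<or> det_rate (p i) \<le> s m" by auto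
      show False
        by (rule no_inf_chain[where R = "br_step s \<pi> p" and f = f and
              E = "\<lambda>\<sigma> j. (sstart s \<pi> p \<sigma> j, real (\<pi> (\<sigma> j) j))", OF ch])
           (rule good_class3[OF vg sp dr])
    next
      case c4
      show False
        by (rule no_inf_chain[where R = "br_step s \<pi> p" and f = f and
              E = "\<lambda>\<sigma> j. (real (\<pi> (\<sigma> j) j), compl s \<pi> p \<sigma> j)", OF ch])
           (rule good_class4[OF vg c4])
    qed
  qed
qed

end
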